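(* Let $a$ be an element of a ring $K$ such that $z_0a^m+z_1a^{m-1}+\dots+z_{m-1}a=0$ for some positive integer $m$ and integers $z_0,\dots,z_{m-1}$ with $z_0>0$, and let $k=\gcd(z_0,z_1,\dots,z_{m-1})$. Suppose moreover that $d\,f(a)=0$ for some integer $d>1$ and some monic $f\in\mathbb{Z}[x]$ with $f(0)=0$. Then $k\,\varphi(a)=0$ for some monic $\varphi\in\mathbb{Z}[x]$ with $\varphi(0)=0$ and $\deg\varphi\le m$.
   Context: Rings are associative and not necessarily unital. *)

theory Defs
  imports "HOL-Computational_Algebra.Polynomial"
begin

text \<open>Rings are associative but not necessarily unital: we use the type class ring
  (no multiplicative identity). Positive powers and integer multiples are defined here.\<close>

fun ppow :: "'a::semigroup_mult \<Rightarrow> nat \<Rightarrow> 'a" where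
  "ppow a 0 = undefined"
| "ppow a (Suc 0) = a"
| "ppow a (Suc (Suc n)) = a * ppow a (Suc n)"

definition natmult :: "nat \<Rightarrow> 'a::comm_monoid_add \<Rightarrow> 'a" where
  "natmult n x = (\<Sum>i<n. x)"

definition zmult :: "int \<Rightarrow> 'a::ab_group_add \<Rightarrow> 'a" where
  "zmult z x = (if 0 \<le> z then natmult (nat z) x else - natmult (nat (- z)) x)"

definition peval0 :: "int poly \<Rightarrow> 'a::ring \<Rightarrow> 'a" where
  "peval0 f a = (\<Sum>i\<in>{1..degree f}. zmult (coeff f i) (ppow a i))"

end

theory Submission
  imports Defs "HOL-Computational_Algebra.Polynomial_Factorial" "HOL-Computational_Algebra.Primes"
    "Berlekamp_Zassenhaus.Factor_Bound"
begin

hide_const (open) UnivPoly.coeff UnivPoly.monom Module.module.smult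


lemma natmult_0[simp]: "natmult 0 x = 0" by (simp add: natmult_def)
lemma natmult_Suc[simp]: "natmult (Suc n) x = natmult n x + x"
  by (simp add: natmult_def)
lemma natmult_add_n: "natmult (m + n) x = natmult m x + natmult n x"
  by (induct n) (simp_all add: add.assoc)
lemma natmult_add_x: "natmult n (x + y) = natmult n x + (natmult n y :: 'a::comm_monoid_add)"
  by (induct n) (simp_all add: ac_simps)
lemma natmult_zero_x[simp]: "natmult n 0 = 0"
  by (induct n) simp_all
lemma natmult_mult_n: "natmult (m * n) x = natmult m (natmult n x)"
  by (induct m) (simp_all add: natmult_add_n natmult_add_x add.commute)
lemma natmult_minus: "natmult n (- x) = - natmult n (x::'a::ab_group_add)"
  by (induct n) simp_all
lemma natmult_diff: "natmult n (x - y) = natmult n x - natmult n (y::'a::ab_group_add)"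
  by (simp only: diff_conv_add_uminus natmult_add_x natmult_minus)
lemma natmult_mult_left: "natmult n (x * y) = natmult n x * (y::'a::ring)"
  by (induct n) (simp_all add: distrib_right)
lemma natmult_mult_right: "natmult n (x * y) = x * natmult n (y::'a::ring)"
  by (induct n) (simp_all add: distrib_left)

lemma natmult_comm: "natmult m (natmult n x) = natmult n (natmult m x)"
proof -
  have "natmult m (natmult n x) = natmult (m * n) x" by (rule natmult_mult_n[symmetric])
  also have "\<dots> = natmult (n * m) x" by (simp only: mult.commute)
  also have "natmult (n * m) x = natmult n (natmult m x)" by (rule natmult_mult_n)
  finally show ?thesis .
qed

lemma zmult_diff_nat: "zmult (int m - int n) x = natmult m x - natmult n x"
proof (cases "n \<le> m")
  case True
  then obtain k where k: "m = n + k" using le_Suc_ex by blast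
  have "int m - int n = int k" using k by simp
  then have "zmult (int m - int n) x = natmult k x" by (simp add: zmult_def)
  then show ?thesis using k by (simp add: natmult_add_n)
next
  case False
  then obtain k where k: "n = m + k" "k > 0" using less_imp_add_positive[of m n] by auto
  have e: "int m - int n = - int k" using k by simp
  have "\<not> 0 \<le> - int k" using k by simp
  then have "zmult (- int k) x = - natmult k x" by (simp add: zmult_def)
  then have "zmult (int m - int n) x = - natmult k x" by (simp only: e)
  moreover have "natmult m x - natmult n x = - natmult k x"
    unfolding k(1) natmult_add_n by simp
  ultimately show ?thesis by simp
qed

lemma zmult_repr: "int (nat z) - int (nat (- z)) = z" by simp
lemma zmult_nat_form: "zmult u x = natmult (nat u) x - natmult (nat (-u)) x"
  using zmult_diff_nat[of "nat u" "nat (-u)" x] by (simp only: zmult_repr)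

lemma zmult_add_left: "zmult (u + v) x = zmult u x + zmult v x"
proof -
  have "u + v = int (nat u + nat v) - int (nat (-u) + nat (-v))"
    using zmult_repr[of u] zmult_repr[of v] unfolding of_nat_add by linarith
  then have "zmult (u + v) x = natmult (nat u + nat v) x - natmult (nat (-u) + nat (-v)) x"
    by (simp only: zmult_diff_nat)
  also have "\<dots> = (natmult (nat u) x - natmult (nat (-u)) x) + (natmult (nat v) x - natmult (nat (-v)) x)"
    by (simp only: natmult_add_n) (simp add: algebra_simps)
  also have "\<dots> = zmult u x + zmult v x" by (simp only: zmult_nat_form)
  finally show ?thesis .
qed

lemma zmult_add_x: "zmult u (x + y) = zmult u x + zmult u (y::'a::ab_group_add)"
  by (simp add: zmult_nat_form natmult_add_x)
lemma zmult_minus_x: "zmult u (- x) = - zmult u (x::'a::ab_group_add)"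
  by (simp add: zmult_nat_form natmult_minus)
lemma zmult_diff_x: "zmult u (x - y) = zmult u x - zmult u (y::'a::ab_group_add)"
  by (simp add: zmult_nat_form natmult_diff)
lemma zmult_zero_x[simp]: "zmult u 0 = 0"
  by (simp add: zmult_nat_form)
lemma zmult_zero_left[simp]: "zmult 0 x = 0"
  by (simp add: zmult_def)
lemma zmult_one[simp]: "zmult 1 x = x"
  by (simp add: zmult_def natmult_def)
lemma zmult_mult_left: "zmult u (x * y) = zmult u x * (y::'a::ring)"
  by (simp add: zmult_nat_form natmult_mult_left left_diff_distrib)
lemma zmult_mult_right: "zmult u (x * y) = x * zmult u (y::'a::ring)"
  by (simp add: zmult_nat_form natmult_mult_right right_diff_distrib)
lemma zmult_natmult: "zmult u (natmult n x) = zmult (u * int n) x"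
proof -
  have e: "int (nat u * n) - int (nat (-u) * n) = u * int n"
    by (simp add: left_diff_distrib[symmetric])
  have "zmult u (natmult n x) = natmult (nat u) (natmult n x) - natmult (nat (-u)) (natmult n x)"
    by (rule zmult_nat_form)
  also have "\<dots> = natmult (nat u * n) x - natmult (nat (-u) * n) x" by (simp only: natmult_mult_n)
  also have "\<dots> = zmult (int (nat u * n) - int (nat (-u) * n)) x" by (simp only: zmult_diff_nat)
  finally show ?thesis by (simp only: e)
qed
lemma zmult_diff_left: "zmult (u - v) x = zmult u x - zmult v x"
proof -
  have "zmult u x = zmult (u - v) x + zmult v x"
    using zmult_add_left[of "u - v" v x] by simp
  then show ?thesis by (simp add: algebra_simps)
qed
lemma zmult_mult: "zmult u (zmult v x) = zmult (u * v) x"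
proof -
  have e: "u * int (nat v) - u * int (nat (-v)) = u * v"
    by (simp only: right_diff_distrib[symmetric] zmult_repr)
  have "zmult u (zmult v x) = zmult u (natmult (nat v) x - natmult (nat (-v)) x)"
    by (simp only: zmult_nat_form[of v])
  also have "\<dots> = zmult (u * int (nat v)) x - zmult (u * int (nat (-v))) x"
    by (simp only: zmult_diff_x zmult_natmult)
  also have "\<dots> = zmult (u * int (nat v) - u * int (nat (-v))) x"
    by (simp only: zmult_diff_left)
  finally show ?thesis by (simp only: e)
qed
lemma zmult_sum: "zmult u (sum f A) = (\<Sum>i\<in>A. zmult u (f i))"
  by (induct A rule: infinite_finite_induct) (simp_all add: zmult_add_x)

definition Ev :: "'a::ring \<Rightarrow> int poly \<Rightarrow> 'a" where
  "Ev a h = peval0 (pCons 0 h) a"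

lemma Ev_sum:
  assumes "degree h < B"
  shows "Ev a h = (\<Sum>i<B. zmult (coeff h i) (ppow a (Suc i)))"
proof (cases "h = 0")
  case True
  then show ?thesis by (simp add: Ev_def peval0_def)
next
  case False
  have "Ev a h = (\<Sum>i\<in>{Suc 0..Suc (degree h)}. zmult (coeff (pCons 0 h) i) (ppow a i))"
    using False by (simp add: Ev_def peval0_def)
  also have "\<dots> = (\<Sum>i\<in>{0..degree h}. zmult (coeff h i) (ppow a (Suc i)))"
    by (simp only: sum.shift_bounds_cl_Suc_ivl coeff_pCons_Suc)
  also have "\<dots> = (\<Sum>i<Suc (degree h). zmult (coeff h i) (ppow a (Suc i)))"
    by (simp only: atLeast0AtMost lessThan_Suc_atMost)
  also have "\<dots> = (\<Sum>i<B. zmult (coeff h i) (ppow a (Suc i)))"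
    by (rule sum.mono_neutral_left) (use assms in \<open>auto simp: coeff_eq_0\<close>)
  finally show ?thesis .
qed

lemma Ev_0[simp]: "Ev a 0 = 0"
  by (simp add: Ev_def peval0_def)

lemma Ev_add: "Ev a (p + q) = Ev a p + Ev a q"
proof -
  define B where "B = Suc (max (degree p) (degree q))"
  have "degree (p + q) < B" unfolding B_def using degree_add_le_max[of p q] by simp
  moreover have "degree p < B" "degree q < B" unfolding B_def by auto
  ultimately show ?thesis
    by (simp add: Ev_sum[of _ B] sum.distrib zmult_add_left)
qed

lemma Ev_smult: "Ev a (smult c p) = zmult c (Ev a p)"
proof -
  define B where "B = Suc (degree p)"
  have "degree (smult c p) < B" unfolding B_def using degree_smult_le[of c p] by simp
  moreover have "degree p < B" unfolding B_def by auto
  ultimately show ?thesis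
    by (simp add: Ev_sum[of _ B] zmult_sum zmult_mult)
qed

lemma Ev_x: "Ev a (pCons 0 p) = a * Ev a p"
proof -
  define B where "B = Suc (degree p)"
  have "degree (pCons 0 p) < Suc B" unfolding B_def
    by (metis degree_pCons_le le_imp_less_Suc)
  then have "Ev a (pCons 0 p) = (\<Sum>i<Suc B. zmult (coeff (pCons 0 p) i) (ppow a (Suc i)))"
    by (rule Ev_sum)
  also have "\<dots> = (\<Sum>i<B. zmult (coeff p i) (ppow a (Suc (Suc i))))"
    by (simp only: sum.lessThan_Suc_shift coeff_pCons_0 coeff_pCons_Suc zmult_zero_left add_0)
  also have "\<dots> = (\<Sum>i<B. a * zmult (coeff p i) (ppow a (Suc i)))"
    by (simp add: zmult_mult_right)
  also have "\<dots> = a * (\<Sum>i<B. zmult (coeff p i) (ppow a (Suc i)))"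
    by (simp only: sum_distrib_left)
  also have "\<dots> = a * Ev a p"
  proof -
    have "Ev a p = (\<Sum>i<B. zmult (coeff p i) (ppow a (Suc i)))"
      by (rule Ev_sum) (simp add: B_def)
    then show ?thesis by simp
  qed
  finally show ?thesis .
qed

lemma Ev_mult:
  assumes "zmult k (Ev a h) = 0"
  shows "zmult k (Ev a (q * h)) = 0"
proof (induct q rule: pCons_induct)
  case 0
  then show ?case by simp
next
  case (pCons c q)
  have "zmult k (Ev a (pCons c q * h)) = zmult k (zmult c (Ev a h)) + a * zmult k (Ev a (q * h))"
    by (simp add: mult_pCons_left Ev_add Ev_smult Ev_x zmult_add_x zmult_mult_right)
  also have "zmult k (zmult c (Ev a h)) = zmult c (zmult k (Ev a h))"
    by (simp add: zmult_mult mult.commute)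
  finally show ?case using assms pCons(2) by simp
qed

definition l10_id :: "int poly set \<Rightarrow> bool" where
  "l10_id I \<longleftrightarrow> 0 \<in> I \<and> (\<forall>x\<in>I. \<forall>y\<in>I. x + y \<in> I) \<and> (\<forall>x\<in>I. \<forall>q. q * x \<in> I)"

lemma is_id_E: "l10_id {h. zmult k (Ev a h) = 0}"
  unfolding l10_id_def by (auto simp: Ev_add zmult_add_x Ev_mult)



lemma id_zero: "l10_id I \<Longrightarrow> 0 \<in> I" by (simp add: l10_id_def)
lemma id_add: "l10_id I \<Longrightarrow> x \<in> I \<Longrightarrow> y \<in> I \<Longrightarrow> x + y \<in> I" by (simp add: l10_id_def)
lemma id_mult: "l10_id I \<Longrightarrow> x \<in> I \<Longrightarrow> q * x \<in> I" by (simp add: l10_id_def)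
lemma id_mult2: "l10_id I \<Longrightarrow> x \<in> I \<Longrightarrow> x * q \<in> I"
  using id_mult[of I x q] by (simp add: mult.commute)
lemma id_smult: "l10_id I \<Longrightarrow> x \<in> I \<Longrightarrow> smult c x \<in> I"
  using id_mult[of I x "[:c:]"] by simp
lemma id_neg: "l10_id I \<Longrightarrow> x \<in> I \<Longrightarrow> - x \<in> I"
  using id_smult[of I x "-1"] by simp
lemma id_diff: "l10_id I \<Longrightarrow> x \<in> I \<Longrightarrow> y \<in> I \<Longrightarrow> x - y \<in> I"
  using id_add[of I x "- y"] id_neg[of I y] by simp

lemma coeff_monom_sum: "coeff (\<Sum>i\<le>D. monom (c i) i) j = (if j \<le> D then c j else 0)"
  by (simp add: coeff_sum coeff_monom)

lemma l10_prime_step: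
  fixes W :: "int poly"
  assumes I: "l10_id I" and W: "W \<in> I" and N: "[:N:] \<in> I" "N \<noteq> 0"
    and p: "prime p" and s: "\<not> p dvd coeff W s" "\<forall>i>s. p dvd coeff W i" and sM: "s \<le> M"
  shows "\<exists>h\<in>I. degree h \<le> M \<and> \<not> p dvd coeff h M"
proof -
  have "coprime (coeff W s) p" using prime_imp_coprime[OF p s(1)] by (simp add: ac_simps)
  then have "gcd (coeff W s) p = 1" by simp
  then obtain u v where uv: "u * coeff W s + v * p = 1" using bezout_int[of "coeff W s" p] by auto
  define W' where "W' = smult u W"
  have W'I: "W' \<in> I" unfolding W'_def using id_smult[OF I W] .
  have sdeg: "s \<le> degree W" using s(1) le_degree by force
  define cQ where "cQ i = (if i < s then 0 else if i = s then - v else coeff W' i div p)" for i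
  define Q where "Q = (\<Sum>i\<le>degree W. monom (cQ i) i)"
  define P1 where "P1 = W' - smult p Q"
  have cP1: "coeff P1 j = (if j < s then coeff W' j else if j = s then 1 else 0)" for j
  proof -
    consider "j < s" | "j = s" | "j > s" "j \<le> degree W" | "j > degree W" using sdeg by linarith
    then show ?thesis
    proof cases
      case 1 then show ?thesis using sdeg by (simp add: P1_def Q_def coeff_monom_sum cQ_def)
    next
      case 2 then show ?thesis using sdeg uv
        by (simp add: P1_def Q_def coeff_monom_sum cQ_def W'_def algebra_simps)
    next
      case 3
      have "p dvd coeff W' j" using s(2) 3 by (simp add: W'_def)
      then show ?thesis using 3 by (simp add: P1_def Q_def coeff_monom_sum cQ_def)
    next
      case 4
      have "coeff W' j = 0" using 4 by (simp add: W'_def coeff_eq_0)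
      then show ?thesis using 4 sdeg by (simp add: P1_def Q_def coeff_monom_sum cQ_def)
    qed
  qed
  have degP1: "degree P1 = s"
  proof (rule antisym)
    show "degree P1 \<le> s" by (rule degree_le) (simp add: cP1)
    show "s \<le> degree P1" by (rule le_degree) (simp add: cP1)
  qed
  have lcP1: "lead_coeff P1 = 1" using degP1 cP1 by simp
  have P1ne: "P1 \<noteq> 0" using lcP1 by auto
  have W'eq: "W' = P1 + smult p Q" by (simp add: P1_def)
  have iter: "\<forall>h. \<exists>r q. (\<forall>i\<ge>s. coeff r i = 0) \<and> h - r - smult (p ^ j) q \<in> I" for j
  proof (induct j)
    case 0
    show ?case
    proof
      fix h :: "int poly"
      show "\<exists>r q. (\<forall>i\<ge>s. coeff r i = 0) \<and> h - r - smult (p ^ 0) q \<in> I"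
        by (rule exI[of _ 0], rule exI[of _ h]) (simp add: id_zero[OF I])
    qed
  next
    case (Suc j)
    show ?case
    proof
      fix h :: "int poly"
      from Suc obtain r q where r: "\<forall>i\<ge>s. coeff r i = 0" and hI: "h - r - smult (p ^ j) q \<in> I"
        by blast
      obtain qq rr where pd: "pseudo_divmod q P1 = (qq, rr)" by fastforce
      from pseudo_divmod[OF P1ne pd] lcP1 degP1
      have qeq: "q = P1 * qq + rr" and rr: "rr = 0 \<or> degree rr < s" by auto
      define r' where "r' = r + smult (p ^ j) rr"
      have r': "\<forall>i\<ge>s. coeff r' i = 0"
        using r rr by (auto simp: r'_def coeff_eq_0)
      have eq: "h - r' - smult (p ^ Suc j) (- (Q * qq)) = (h - r - smult (p ^ j) q) + smult (p ^ j) (W' * qq)"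
        unfolding r'_def W'eq qeq
        by (simp add: algebra_simps smult_add_right smult_diff_right mult_smult_left)
      have "h - r' - smult (p ^ Suc j) (- (Q * qq)) \<in> I"
        unfolding eq by (rule id_add[OF I hI id_smult[OF I id_mult2[OF I W'I]]])
      then show "\<exists>r q. (\<forall>i\<ge>s. coeff r i = 0) \<and> h - r - smult (p ^ Suc j) q \<in> I"
        using r' by blast
    qed
  qed
  obtain N' where N': "N = p ^ multiplicity p N * N'" "\<not> p dvd N'"
    using multiplicity_decompose'[of N p] N(2) p by (metis not_prime_unit)
  define e where "e = multiplicity p N"
  obtain r q where r: "\<forall>i\<ge>s. coeff r i = 0" and hI: "monom 1 M - r - smult (p ^ e) q \<in> I"
    using iter by blast
  have "smult N' (monom 1 M - r - smult (p ^ e) q) \<in> I" by (rule id_smult[OF I hI])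
  moreover have "smult N (q) \<in> I" using id_mult2[OF I N(1), of q] by simp
  ultimately have hhI: "smult N' (monom 1 M - r - smult (p ^ e) q) + smult N q \<in> I"
    by (rule id_add[OF I])
  have hh: "smult N' (monom 1 M - r - smult (p ^ e) q) + smult N q = smult N' (monom 1 M - r)"
    using N'(1) unfolding e_def[symmetric] by (simp add: smult_diff_right smult_add_right algebra_simps)
  show ?thesis
  proof (rule bexI[of _ "smult N' (monom 1 M - r)"])
    show "smult N' (monom 1 M - r) \<in> I" using hhI hh by simp
    show "degree (smult N' (monom 1 M - r)) \<le> M \<and> \<not> p dvd coeff (smult N' (monom 1 M - r)) M"
    proof
      show "degree (smult N' (monom 1 M - r)) \<le> M"
        by (rule degree_le) (use r sM in \<open>auto simp: coeff_monom\<close>)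
      show "\<not> p dvd coeff (smult N' (monom 1 M - r)) M"
        using r sM N'(2) by simp
    qed
  qed
qed

lemma l10_core:
  fixes W :: "int poly"
  assumes I: "l10_id I" and W: "W \<in> I" "W \<noteq> 0" and cW: "content W = 1"
    and N: "[:N:] \<in> I" "N \<noteq> 0"
  shows "\<exists>G\<in>I. lead_coeff G = 1 \<and> degree G = degree W"
proof -
  define M where "M = degree W"
  define L where "L = {coeff h M | h. h \<in> I \<and> degree h \<le> M}"
  have Ladd: "x \<in> L \<Longrightarrow> y \<in> L \<Longrightarrow> x + y \<in> L" for x y
  proof -
    assume "x \<in> L" "y \<in> L"
    then obtain hx hy where "hx \<in> I" "degree hx \<le> M" "x = coeff hx M"
      "hy \<in> I" "degree hy \<le> M" "y = coeff hy M" unfolding L_def by blast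
    then show "x + y \<in> L" unfolding L_def
      by (intro CollectI exI[of _ "hx + hy"]) (auto intro: id_add[OF I] degree_add_le)
  qed
  have Lmult: "x \<in> L \<Longrightarrow> c * x \<in> L" for x c
  proof -
    assume "x \<in> L"
    then obtain hx where "hx \<in> I" "degree hx \<le> M" "x = coeff hx M" unfolding L_def by blast
    then show "c * x \<in> L" unfolding L_def
      by (intro CollectI exI[of _ "smult c hx"]) (auto intro: id_smult[OF I] order.trans[OF degree_smult_le] id_zero[OF I])
  qed
  have Lp: "\<exists>t\<in>L. \<not> p dvd t" if p: "prime p" for p
  proof -
    define S where "S = {i. \<not> p dvd coeff W i}"
    have Ssub: "S \<subseteq> {..M}" unfolding S_def M_def
    proof
      fix i assume "i \<in> {i. \<not> p dvd coeff W i}"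
      then have "coeff W i \<noteq> 0" by auto
      then show "i \<in> {..degree W}" using le_degree by auto
    qed
    then have finS: "finite S" using finite_subset[OF Ssub] by simp
    have "S \<noteq> {}"
    proof
      assume "S = {}"
      then have "\<forall>n. p dvd coeff W n" unfolding S_def by auto
      then have "[:p:] dvd W" by (simp add: const_poly_dvd_iff)
      then have "p dvd content W" by (simp add: const_poly_dvd_iff_dvd_content)
      then have "is_unit p" using cW by simp
      then show False using p not_prime_unit by blast
    qed
    define s where "s = Max S"
    have sS: "s \<in> S" unfolding s_def using finS \<open>S \<noteq> {}\<close> by (rule Max_in)
    have sgt: "\<forall>i>s. p dvd coeff W i"
    proof (intro allI impI)
      fix i assume "s < i"
      have "i \<notin> S"
      proof
        assume "i \<in> S"
        then have "i \<le> s" unfolding s_def using finS by (simp add: Max_ge)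
        then show False using \<open>s < i\<close> by simp
      qed
      then show "p dvd coeff W i" unfolding S_def by simp
    qed
    have "s \<le> M" using sS Ssub by auto
    have "\<not> p dvd coeff W s" using sS unfolding S_def by simp
    from l10_prime_step[OF I W(1) N p this sgt \<open>s \<le> M\<close>] obtain h where
      "h \<in> I" "degree h \<le> M" "\<not> p dvd coeff h M" by blast
    then show ?thesis unfolding L_def by blast
  qed
  have lW: "lead_coeff W \<in> L" unfolding L_def M_def using W(1) by blast
  have lWne: "lead_coeff W \<noteq> 0" using W(2) by simp
  have exg: "\<exists>n::nat. n > 0 \<and> int n \<in> L"
  proof (cases "lead_coeff W > 0")
    case True then show ?thesis using lW by (intro exI[of _ "nat (lead_coeff W)"]) auto
  next
    case False
    then have "- lead_coeff W > 0" using lWne by linarith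
    moreover have "- lead_coeff W \<in> L" using Lmult[OF lW, of "-1"] by simp
    ultimately show ?thesis by (intro exI[of _ "nat (- lead_coeff W)"]) auto
  qed
  define g where "g = (LEAST n::nat. n > 0 \<and> int n \<in> L)"
  have g: "g > 0" "int g \<in> L" using LeastI_ex[OF exg] unfolding g_def by auto
  have gmin: "n > 0 \<Longrightarrow> int n \<in> L \<Longrightarrow> g \<le> n" for n
    unfolding g_def by (rule Least_le) simp
  have gdvd: "int g dvd t" if t: "t \<in> L" for t
  proof -
    have "t mod int g = t + (- (t div int g)) * int g" by (simp add: minus_div_mult_eq_mod[symmetric])
    then have tm: "t mod int g \<in> L" using Ladd[OF t Lmult[OF g(2), of "- (t div int g)"]] by simp
    have "0 \<le> t mod int g" "t mod int g < int g" using g(1) by auto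
    show ?thesis
    proof (rule ccontr)
      assume "\<not> int g dvd t"
      then have "t mod int g > 0" using \<open>0 \<le> t mod int g\<close> by (auto simp: dvd_eq_mod_eq_0)
      then have "g \<le> nat (t mod int g)" using gmin[of "nat (t mod int g)"] tm by simp
      then have "int g \<le> t mod int g" using \<open>t mod int g > 0\<close> by linarith
      then show False using \<open>t mod int g < int g\<close> by linarith
    qed
  qed
  have g1: "g = 1"
  proof (rule ccontr)
    assume "g \<noteq> 1"
    then have "int g \<noteq> 0" "\<not> is_unit (int g)" using g(1) by auto
    then obtain p where p: "prime p" "p dvd int g" using prime_divisorE by blast
    from Lp[OF p(1)] obtain t where "t \<in> L" "\<not> p dvd t" by blast
    then show False using gdvd p(2) dvd_trans by blast
  qed
  then obtain h where h: "h \<in> I" "degree h \<le> M" "coeff h M = 1" using g(2) unfolding L_def by auto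
  have "degree h = M" using h(2) h(3) le_degree[of h M] by fastforce
  then show ?thesis using h unfolding M_def by (intro bexI[of _ h]) auto
qed



lemma inv_cancel_aux: "(a::rat) \<noteq> 0 \<Longrightarrow> a * b * inverse a = b"
  by (simp add: mult.commute[of a] mult.assoc)

lemma l10_split:
  fixes W f :: "int poly"
  assumes W: "W \<noteq> 0" and f: "lead_coeff f = 1"
  shows "\<exists>h1 W2 f2 A B r. lead_coeff h1 dvd 1 \<and> W = h1 * W2 \<and> f = h1 * f2 \<and> r \<noteq> 0
            \<and> A * W2 + B * f2 = [:r:]"
proof -
  define h1 where "h1 = gcd W f"
  obtain W2 where W2: "W = h1 * W2" unfolding h1_def by (rule dvdE[OF gcd_dvd1[of W f]]) auto
  obtain f2 where f2: "f = h1 * f2" unfolding h1_def by (rule dvdE[OF gcd_dvd2[of W f]]) auto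
  have h1ne: "h1 \<noteq> 0" unfolding h1_def using W by simp
  have lh1: "lead_coeff h1 dvd 1" proof -
    have "lead_coeff h1 * lead_coeff f2 = 1" using f unfolding f2 lead_coeff_mult .
    then show ?thesis by (metis dvd_triv_left)
  qed
  have "h1 = h1 * gcd W2 f2"
  proof -
    have "gcd (h1 * W2) (h1 * f2) = gcd W f" by (simp only: W2[symmetric] f2[symmetric])
    then have "h1 = gcd (h1 * W2) (h1 * f2)" unfolding h1_def by simp
    also have "\<dots> = normalize h1 * gcd W2 f2" by (rule gcd_mult_distrib'[symmetric])
    also have "normalize h1 = h1" unfolding h1_def by simp
    finally show ?thesis .
  qed
  then have g1: "gcd W2 f2 = 1" using h1ne by simp
  have "gcd (of_int_poly W2 :: rat poly) (of_int_poly f2) = 1"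
    unfolding gcd_rat_to_gcd_int g1 by simp
  then have "fst (bezout_coefficients (of_int_poly W2 :: rat poly) (of_int_poly f2)) * of_int_poly W2
     + snd (bezout_coefficients (of_int_poly W2 :: rat poly) (of_int_poly f2)) * of_int_poly f2 = 1"
    using bezout_coefficients_fst_snd[of "of_int_poly W2 :: rat poly" "of_int_poly f2"] by simp
  then obtain x y :: "rat poly" where xy: "x * of_int_poly W2 + y * of_int_poly f2 = 1"
    by blast
  obtain d1 x1 where dx: "rat_to_int_poly x = (d1, x1)" by force
  obtain d2 y1 where dy: "rat_to_int_poly y = (d2, y1)" by force
  note x = rat_to_int_poly[OF dx] and y = rat_to_int_poly[OF dy]
  have d1: "rat_of_int d1 \<noteq> 0" and d2: "rat_of_int d2 \<noteq> 0" using x(2) y(2) by auto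
  have k1: "rat_of_int d1 * rat_of_int d2 * inverse (rat_of_int d1) = rat_of_int d2"
    using d1 by (rule inv_cancel_aux)
  have k2: "rat_of_int d1 * rat_of_int d2 * inverse (rat_of_int d2) = rat_of_int d1"
    using d2 inv_cancel_aux[of "rat_of_int d2" "rat_of_int d1"] by (simp add: mult.commute)
  have e1: "smult (of_int (d1*d2)) (x * of_int_poly W2) = of_int_poly (smult d2 x1 * W2)"
    unfolding x(1) using d1 by (simp add: hom_distribs mult_smult_left k1)
  have e2: "smult (of_int (d1*d2)) (y * of_int_poly f2) = of_int_poly (smult d1 y1 * f2)"
    unfolding y(1) using d2 by (simp add: hom_distribs mult_smult_left k2)
  have "of_int_poly (smult d2 x1 * W2 + smult d1 y1 * f2) = (smult (of_int (d1 * d2)) (x * of_int_poly W2 + y * of_int_poly f2) :: rat poly)"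
    by (simp only: smult_add_right e1 e2 of_int_poly_hom.hom_add)
  also have "\<dots> = [:rat_of_int (d1 * d2):]" unfolding xy by simp
  also have "\<dots> = of_int_poly [:d1 * d2:]"
    by (rule poly_eqI) (simp add: coeff_map_poly coeff_pCons split: nat.split)
  finally have "smult d2 x1 * W2 + smult d1 y1 * f2 = [:d1 * d2:]" by (rule of_int_poly_hom.injectivity)
  moreover have "d1 * d2 \<noteq> 0" using x(2) y(2) by simp
  ultimately show ?thesis using lh1 W2 f2 by blast
qed

lemma Ev_sum_set: "Ev a (sum f A) = (\<Sum>i\<in>A. Ev a (f i))"
  by (induct A rule: infinite_finite_induct) (simp_all add: Ev_add)

lemma Ev_monom: "Ev a (monom c j) = zmult c (ppow a (Suc j))"
proof -
  have "degree (monom c j) < Suc j" using degree_monom_le[of c j] by simp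
  then have "Ev a (monom c j) = (\<Sum>i<Suc j. zmult (coeff (monom c j) i) (ppow a (Suc i)))"
    by (rule Ev_sum)
  also have "\<dots> = (\<Sum>i<Suc j. if i = j then zmult c (ppow a (Suc i)) else 0)"
    by (rule sum.cong) (auto simp: coeff_monom)
  also have "\<dots> = zmult c (ppow a (Suc j))" by simp
  finally show ?thesis .
qed

theorem lemma10:
  fixes a :: "'a::ring" and m :: nat and z :: "nat \<Rightarrow> int" and d :: int and f :: "int poly"
  assumes "m > 0"
    and "z 0 > 0"
    and "(\<Sum>i<m. zmult (z i) (ppow a (m - i))) = 0"
    and "d > 1"
    and "lead_coeff f = 1" and "coeff f 0 = 0"
    and "zmult d (peval0 f a) = 0"
  shows "\<exists>\<phi>::int poly. lead_coeff \<phi> = 1 \<and> coeff \<phi> 0 = 0 \<and> degree \<phi> \<le> m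
           \<and> zmult (Gcd (z ` {..<m})) (peval0 \<phi> a) = 0"
proof -
  note m = assms(1) and z0 = assms(2) and rel = assms(3) and d = assms(4)
    and lf = assms(5) and f0 = assms(6) and df = assms(7)
  define k where "k = Gcd (z ` {..<m})"
  have kdvd: "k dvd z i" if "i < m" for i unfolding k_def using that by (simp add: Gcd_dvd)
  have "k \<noteq> 0"
  proof
    assume "k = 0"
    then have "z 0 = 0" using kdvd[of 0] m by simp
    then show False using z0 by simp
  qed
  moreover have "k \<ge> 0" unfolding k_def by simp
  ultimately have kpos: "k > 0" by simp
  define w where "w i = z i div k" for i
  have zw: "z i = k * w i" if "i < m" for i unfolding w_def using kdvd[OF that] by simp
  define W where "W = (\<Sum>i<m. monom (w i) (m - 1 - i))"
  have cW: "coeff W j = (if j < m then w (m - 1 - j) else 0)" for j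
  proof -
    have "coeff W j = (\<Sum>i<m. if m - 1 - i = j then w i else 0)"
      unfolding W_def by (simp add: coeff_sum coeff_monom)
    also have "\<dots> = (\<Sum>i<m. if i = m - 1 - j \<and> j < m then w (m - 1 - j) else 0)"
      by (rule sum.cong) auto
    also have "\<dots> = (if j < m then w (m - 1 - j) else 0)"
      by (cases "j < m") (auto simp: sum.delta)
    finally show ?thesis .
  qed
  have w0: "w 0 > 0" using zw[of 0] m z0 kpos by (simp add: zero_less_mult_iff)
  have degW: "degree W = m - 1"
  proof (rule antisym)
    show "degree W \<le> m - 1" by (rule degree_le) (use m in \<open>auto simp: cW\<close>)
    show "m - 1 \<le> degree W" by (rule le_degree) (use m w0 in \<open>simp add: cW\<close>)
  qed
  have Wne: "W \<noteq> 0" using w0 m cW[of "m - 1"] by auto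
  have primW: "\<exists>j. \<not> p dvd coeff W j" if p: "prime p" for p
  proof (rule ccontr)
    assume "\<not> (\<exists>j. \<not> p dvd coeff W j)"
    then have pw: "p dvd w i" if "i < m" for i
    proof -
      from \<open>\<not> (\<exists>j. \<not> p dvd coeff W j)\<close> have "p dvd coeff W (m - 1 - i)" by blast
      moreover have "m - 1 - i < m" "m - 1 - (m - 1 - i) = i" using that by auto
      ultimately show ?thesis by (simp add: cW)
    qed
    have pk: "p * k dvd z i" if "i < m" for i using pw[OF that] zw[OF that] by simp
    have "p * k dvd Gcd (z ` {..<m})"
    proof (rule Gcd_greatest)
      fix y assume "y \<in> z ` {..<m}"
      then show "p * k dvd y" using pk by auto
    qed
    then have "p * k dvd k" unfolding k_def .
    then have "p dvd 1" using \<open>k \<noteq> 0\<close> by (metis mult_dvd_mono dvd_mult_cancel_right mult_1)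
    then show False using p not_prime_unit by blast
  qed
  have contW: "content W = 1"
  proof (rule ccontr)
    assume "content W \<noteq> 1"
    moreover have "content W \<noteq> 0" using Wne by simp
    ultimately have "\<not> is_unit (content W)" by simp
    then obtain p where p: "prime p" "p dvd content W"
      using prime_divisorE \<open>content W \<noteq> 0\<close> by blast
    then have "p dvd coeff W j" for j using content_dvd_coeff dvd_trans by blast
    then show False using primW[OF p(1)] by blast
  qed
  define I where "I = {h. zmult k (Ev a h) = 0}"
  have I: "l10_id I" unfolding I_def by (rule is_id_E)
  have WI: "W \<in> I"
  proof -
    have "zmult k (Ev a W) = (\<Sum>i<m. zmult k (zmult (w i) (ppow a (Suc (m - 1 - i)))))"
      unfolding W_def by (simp add: Ev_sum_set Ev_monom zmult_sum)
    also have "\<dots> = (\<Sum>i<m. zmult (z i) (ppow a (m - i)))"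
    proof (rule sum.cong)
      fix i assume "i \<in> {..<m}"
      then have "Suc (m - 1 - i) = m - i" "k * w i = z i" using zw[of i] by auto
      then show "zmult k (zmult (w i) (ppow a (Suc (m - 1 - i)))) = zmult (z i) (ppow a (m - i))"
        by (simp add: zmult_mult)
    qed simp
    finally show ?thesis unfolding I_def using rel by simp
  qed
  obtain c f' where ff: "f = pCons c f'" by (cases f) auto
  have c0: "c = 0" using f0 ff by simp
  have f'ne: "f' \<noteq> 0" using lf ff c0 by auto
  have lf': "lead_coeff f' = 1" using lf ff f'ne by simp
  have Evf: "Ev a f' = peval0 f a" unfolding Ev_def ff c0 ..
  have fI: "smult d f' \<in> I" unfolding I_def using df by (simp add: Ev_smult Evf)
  from l10_split[OF Wne lf'] obtain h1 W2 f2 A B r where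
    sp: "lead_coeff h1 dvd 1" "W = h1 * W2" "f' = h1 * f2" "r \<noteq> 0" "A * W2 + B * f2 = [:r:]"
    by blast
  define I2 where "I2 = {u. u * h1 \<in> I}"
  have I2: "l10_id I2"
    unfolding l10_id_def I2_def using I
    by (auto simp: distrib_right mult.assoc intro: id_zero id_add id_mult)
  have W2I: "W2 \<in> I2" unfolding I2_def using WI sp(2) by (simp add: mult.commute)
  have f2I: "smult d f2 \<in> I2" unfolding I2_def using fI sp(3) by (simp add: mult.commute)
  have "[:d * r:] = smult d A * W2 + B * smult d f2"
    using arg_cong[OF sp(5), of "smult d"] by (simp add: smult_add_right)
  moreover have "smult d A * W2 + B * smult d f2 \<in> I2"
    using id_add[OF I2 id_mult[OF I2 W2I, of "smult d A"] id_mult[OF I2 f2I, of B]] .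
  ultimately have rI: "[:d * r:] \<in> I2" by simp
  have drne: "d * r \<noteq> 0" using d sp(4) by simp
  have h1ne: "h1 \<noteq> 0" using sp(1) by auto
  have W2ne: "W2 \<noteq> 0" using Wne sp(2) by auto
  have "content W2 = 1"
  proof -
    have "content h1 * content W2 = 1" using contW sp(2) by (simp add: content_mult)
    then have "is_unit (content W2)" by (metis dvd_triv_right)
    then show ?thesis by simp
  qed
  from l10_core[OF I2 W2I W2ne this rI drne] obtain G where
    G: "G \<in> I2" "lead_coeff G = 1" "degree G = degree W2" by blast
  define s where "s = lead_coeff h1"
  have "\<bar>s\<bar> = 1" using sp(1) unfolding s_def by (simp add: zdvd1_eq)
  then have ss: "s * s = 1" by (cases "s \<ge> 0") auto
  define G' where "G' = smult s (G * h1)"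
  have G'I: "G' \<in> I" unfolding G'_def using G(1) id_smult[OF I] unfolding I2_def by blast
  have Gne: "G \<noteq> 0" using G(2) by auto
  have lG': "lead_coeff G' = 1" unfolding G'_def using ss G(2) h1ne by (simp add: lead_coeff_mult s_def)
  have dG': "degree G' = m - 1"
  proof -
    have "s \<noteq> 0" using ss by auto
    then have "degree G' = degree G + degree h1" unfolding G'_def
      using degree_mult_eq[OF Gne h1ne] by simp
    also have "\<dots> = degree W" using G(3) sp(2) degree_mult_eq[OF h1ne W2ne] by simp
    finally show ?thesis using degW by simp
  qed
  have G'ne: "G' \<noteq> 0" using lG' by auto
  show ?thesis
  proof (intro exI[of _ "pCons 0 G'"] conjI)
    show "lead_coeff (pCons 0 G') = 1" using G'ne lG' by simp
    show "coeff (pCons 0 G') 0 = 0" by simp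
    show "degree (pCons 0 G') \<le> m" using G'ne dG' m by simp
    show "zmult (Gcd (z ` {..<m})) (peval0 (pCons 0 G') a) = 0"
      using G'I unfolding I_def k_def Ev_def by simp
  qed
qed

end
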